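(* Let $A^{(1)},A^{(2)},A^{(3)},A^{(4)}$ be i.i.d. random variables with values in $\{1,2,3,\dots\}$, and let $X^{(a)},Y^{(b)},Z^{(c)}$ ($a,b,c\ge1$) be i.i.d. random variables with values in $[0,\infty)$, all of these random variables mutually independent. Then $$\max\Big(\sum_{a=1}^{A^{(1)}}X^{(a)},\ \sum_{b=1}^{A^{(2)}}Y^{(b)}\Big)\ \ge_{\mathrm{st}}\ \sum_{a=1}^{\max(A^{(3)},A^{(4)})}Z^{(a)}.$$
   Context: For random variables $X,Y$ with domains $D_X,D_Y\subseteq\mathbb{R}$, $X\ge_{\mathrm{st}}Y$ ($X$ stochastically dominates $Y$) means $\Pr(X>z)\ge\Pr(Y>z)$ for all $z\in D_X\cap D_Y$. *)

theory Defs
  imports "HOL-Probability.Probability"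
begin

datatype rv_idx = IA nat | IX nat | IY nat | IZ nat

text \<open>The joint family, all viewed as real-valued (the integer-valued A^(i) are
  embedded into the reals, which does not change the generated sigma-algebras).\<close>
fun joint_family ::
  "(nat \<Rightarrow> 'a \<Rightarrow> nat) \<Rightarrow> (nat \<Rightarrow> 'a \<Rightarrow> real) \<Rightarrow> (nat \<Rightarrow> 'a \<Rightarrow> real) \<Rightarrow>
   (nat \<Rightarrow> 'a \<Rightarrow> real) \<Rightarrow> rv_idx \<Rightarrow> 'a \<Rightarrow> real" where
  "joint_family A X Y Z (IA i) = (\<lambda>\<omega>. real (A i \<omega>))"
| "joint_family A X Y Z (IX a) = X a"
| "joint_family A X Y Z (IY b) = Y b"
| "joint_family A X Y Z (IZ c) = Z c"

definition rv_indices :: "rv_idx set" where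
  "rv_indices = IA ` {1..4} \<union> IX ` {1..} \<union> IY ` {1..} \<union> IZ ` {1..}"

end

theory Submission
  imports Defs
begin

context prob_space begin

lemma three_indep:
  fixes F :: "'i \<Rightarrow> 'a \<Rightarrow> real"
  assumes ind: "indep_vars (\<lambda>_. borel) F I"
    and ii: "p \<in> I" and jj: "q \<in> I" and pq: "p \<noteq> q"
    and WK: "W ` K \<subseteq> I" and Wp: "p \<notin> W ` K" and Wq: "q \<notin> W ` K" and fin: "finite K"
  shows "prob {\<omega> \<in> space M. F p \<omega> = u \<and> F q \<omega> = v \<and> (\<Sum>a\<in>K. F (W a) \<omega>) > z}
       = prob {\<omega> \<in> space M. F p \<omega> = u} * prob {\<omega> \<in> space M. F q \<omega> = v}
         * prob {\<omega> \<in> space M. (\<Sum>a\<in>K. F (W a) \<omega>) > z}"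
proof -
  define Kf :: "nat \<Rightarrow> 'i set" where "Kf = (\<lambda>l::nat. if l = 0 then {p} else if l = 1 then {q} else W ` K)"
  define Yf :: "nat \<Rightarrow> ('i \<Rightarrow> real) \<Rightarrow> real" where "Yf = (\<lambda>l::nat. if l = 0 then (\<lambda>f. f p) else if l = 1 then (\<lambda>f. f q)
      else (\<lambda>f. \<Sum>a\<in>K. f (W a)))"
  define B where "B = (\<lambda>l::nat. if l = 0 then {u} else if l = 1 then {v} else {z<..})"
  have r: "indep_vars (\<lambda>j. PiM (Kf j) (\<lambda>_. borel)) (\<lambda>j \<omega>. restrict (\<lambda>i. F i \<omega>) (Kf j)) {0,1,2}"
    by (rule indep_vars_restrict[OF ind]) (use ii jj pq WK Wp Wq in \<open>auto simp: Kf_def disjoint_family_on_def\<close>)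
  have c: "indep_vars (\<lambda>_. borel) (\<lambda>l \<omega>. Yf l (restrict (\<lambda>i. F i \<omega>) (Kf l))) {0,1,2}"
  proof (rule indep_vars_compose2[OF r])
    fix l :: nat assume l: "l \<in> {0,1,2}"
    show "Yf l \<in> borel_measurable (PiM (Kf l) (\<lambda>_. borel))"
    proof -
      consider "l = 0" | "l = 1" | "l = 2" using l by auto
      then show ?thesis
      proof cases
        case 1 then show ?thesis by (simp add: Yf_def Kf_def)
      next
        case 2 then show ?thesis by (simp add: Yf_def Kf_def)
      next
        case 3 then show ?thesis
        proof -
          have e: "Yf l = (\<lambda>f. \<Sum>a\<in>K. f (W a))" "Kf l = W ` K" using 3 by (simp_all add: Yf_def Kf_def)
          have "(\<lambda>f. \<Sum>a\<in>K. f (W a)) \<in> borel_measurable (PiM (W ` K) (\<lambda>_. borel :: real measure))"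
            by (rule borel_measurable_sum, rule measurable_component_singleton) auto
          then show ?thesis using e by simp
        qed
      qed
    qed
  qed
  have "prob (\<Inter>l\<in>{0,1,2}. (\<lambda>\<omega>. Yf l (restrict (\<lambda>i. F i \<omega>) (Kf l))) -` B l \<inter> space M)
     = (\<Prod>l\<in>{0,1,2}. prob ((\<lambda>\<omega>. Yf l (restrict (\<lambda>i. F i \<omega>) (Kf l))) -` B l \<inter> space M))"
    by (rule indep_varsD[OF c]) (auto simp: B_def)
  moreover have "(\<Inter>l\<in>{0,1,2}. (\<lambda>\<omega>. Yf l (restrict (\<lambda>i. F i \<omega>) (Kf l))) -` B l \<inter> space M)
     = {\<omega> \<in> space M. F p \<omega> = u \<and> F q \<omega> = v \<and> (\<Sum>a\<in>K. F (W a) \<omega>) > z}"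
    using Wp Wq by (auto simp: Yf_def Kf_def B_def intro!: sum.cong)
  moreover have "(\<Prod>l\<in>{0,1,2}. prob ((\<lambda>\<omega>. Yf l (restrict (\<lambda>i. F i \<omega>) (Kf l))) -` B l \<inter> space M))
     = prob {\<omega> \<in> space M. F p \<omega> = u} * prob {\<omega> \<in> space M. F q \<omega> = v}
         * prob {\<omega> \<in> space M. (\<Sum>a\<in>K. F (W a) \<omega>) > z}"
  proof -
    have "(\<lambda>\<omega>. Yf 2 (restrict (\<lambda>i. F i \<omega>) (Kf 2))) -` B 2 \<inter> space M = {\<omega> \<in> space M. (\<Sum>a\<in>K. F (W a) \<omega>) > z}"
      by (auto simp: Yf_def Kf_def B_def intro!: sum.cong)
    moreover have "(\<lambda>\<omega>. Yf 0 (restrict (\<lambda>i. F i \<omega>) (Kf 0))) -` B 0 \<inter> space M = {\<omega> \<in> space M. F p \<omega> = u}"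
      by (auto simp: Yf_def Kf_def B_def)
    moreover have "(\<lambda>\<omega>. Yf 1 (restrict (\<lambda>i. F i \<omega>) (Kf 1))) -` B 1 \<inter> space M = {\<omega> \<in> space M. F q \<omega> = v}"
      by (auto simp: Yf_def Kf_def B_def)
    ultimately show ?thesis by (simp add: mult.assoc)
  qed
  ultimately show ?thesis by simp
qed

lemma sum_dist:
  fixes F :: "'i \<Rightarrow> 'a \<Rightarrow> real"
  assumes ind: "indep_vars (\<lambda>_. borel) F I"
    and WK: "W ` K \<subseteq> I" and inj: "inj_on W K" and fin: "finite K" and ne: "K \<noteq> {}"
    and dist: "\<And>a. a \<in> K \<Longrightarrow> distr M borel (F (W a)) = D"
  shows "prob {\<omega> \<in> space M. (\<Sum>a\<in>K. F (W a) \<omega>) > z}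
       = measure (PiM K (\<lambda>_. D)) {g \<in> space (PiM K (\<lambda>_. D)). (\<Sum>a\<in>K. g a) > z}"
proof -
  have i1: "indep_vars (\<lambda>_. borel) F (W ` K)" by (rule indep_vars_subset[OF ind WK])
  have rv: "\<And>i. i \<in> W ` K \<Longrightarrow> random_variable borel (F i)"
    using i1 by (auto simp: indep_vars_def)
  have d1: "distr M (PiM (W ` K) (\<lambda>_. borel)) (\<lambda>\<omega>. \<lambda>i\<in>W ` K. F i \<omega>) = PiM (W ` K) (\<lambda>i. distr M borel (F i))"
    using indep_vars_iff_distr_eq_PiM'[where I="W ` K" and M'="\<lambda>_. borel" and X=F] i1 ne rv by auto
  also have "\<dots> = PiM (W ` K) (\<lambda>_. D)"
    by (rule PiM_cong) (auto simp: dist)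
  finally have d2: "distr M (PiM (W ` K) (\<lambda>_. borel)) (\<lambda>\<omega>. \<lambda>i\<in>W ` K. F i \<omega>) = PiM (W ` K) (\<lambda>_. D)" .
  obtain a0 where a0: "a0 \<in> K" using ne by auto
  have psD: "prob_space D" using dist[OF a0] rv[of "W a0"] a0 by (metis image_eqI prob_space_distr)
  have spD: "space D = UNIV" using dist[OF a0] by (metis space_distr space_borel)
  have setsD: "sets D = sets borel" using dist[OF a0] by (metis sets_distr)
  define P where "P = {f \<in> space (PiM (W ` K) (\<lambda>_. borel)). (\<Sum>a\<in>K. f (W a)) > (z::real)}"
  have Pm: "P \<in> sets (PiM (W ` K) (\<lambda>_. borel))"
    unfolding P_def
    by measurable
  have Tm: "(\<lambda>\<omega>. \<lambda>i\<in>W ` K. F i \<omega>) \<in> measurable M (PiM (W ` K) (\<lambda>_. borel))"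
    using rv by (auto intro!: measurable_restrict)
  have ev: "{\<omega> \<in> space M. (\<Sum>a\<in>K. F (W a) \<omega>) > z} = (\<lambda>\<omega>. \<lambda>i\<in>W ` K. F i \<omega>) -` P \<inter> space M"
    by (auto simp: P_def space_PiM)
  have "prob {\<omega> \<in> space M. (\<Sum>a\<in>K. F (W a) \<omega>) > z} = measure (PiM (W ` K) (\<lambda>_. D)) P"
    unfolding ev using measure_distr[OF Tm Pm] d2 by simp
  also have sp: "space (PiM (W ` K) (\<lambda>_. D)) = space (PiM (W ` K) (\<lambda>_. borel :: real measure))"
    by (simp add: space_PiM spD)
  define S where "S = {g \<in> space (PiM K (\<lambda>_. D)). (\<Sum>a\<in>K. g a) > z}"
  have setsPK: "sets (PiM K (\<lambda>_. D)) = sets (PiM K (\<lambda>_. borel :: real measure))"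
    by (rule sets_PiM_cong) (auto simp: setsD)
  have spK: "space (PiM K (\<lambda>_. D)) = space (PiM K (\<lambda>_. borel :: real measure))"
    by (simp add: space_PiM spD)
  have Sm: "S \<in> sets (PiM K (\<lambda>_. D))"
    unfolding setsPK S_def spK by measurable
  have setsPW: "sets (PiM (W ` K) (\<lambda>_. D)) = sets (PiM (W ` K) (\<lambda>_. borel :: real measure))"
    by (rule sets_PiM_cong) (auto simp: setsD)
  have tm: "(\<lambda>\<omega>. \<lambda>n\<in>K. \<omega> (W n)) \<in> measurable (PiM (W ` K) (\<lambda>_. D)) (PiM K (\<lambda>_. D))"
    by (rule measurable_restrict, rule measurable_component_singleton) auto
  have PS: "P = (\<lambda>\<omega>. \<lambda>n\<in>K. \<omega> (W n)) -` S \<inter> space (PiM (W ` K) (\<lambda>_. D))"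
    unfolding P_def S_def sp by (auto simp: space_PiM spD)
  have "measure (PiM (W ` K) (\<lambda>_. D)) P
      = measure (distr (PiM (W ` K) (\<lambda>_. D)) (PiM K (\<lambda>_. D)) (\<lambda>\<omega>. \<lambda>n\<in>K. \<omega> (W n))) S"
    unfolding PS by (rule measure_distr[symmetric, OF tm Sm])
  also have "distr (PiM (W ` K) (\<lambda>_. D)) (PiM K (\<lambda>_. D)) (\<lambda>\<omega>. \<lambda>n\<in>K. \<omega> (W n)) = PiM K (\<lambda>_. D)"
    using distr_PiM_reindex[where K="W ` K" and M="\<lambda>_. D" and f=W and I=K] psD inj by auto
  finally show ?thesis unfolding S_def
    using \<open>prob {\<omega> \<in> space M. (\<Sum>a\<in>K. F (W a) \<omega>) > z} = measure (PiM (W ` K) (\<lambda>_. D)) P\<close> by simp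
qed
end


theorem corollary1:
  fixes M :: "'a measure"
    and A :: "nat \<Rightarrow> 'a \<Rightarrow> nat"
    and X Y Z :: "nat \<Rightarrow> 'a \<Rightarrow> real"
  assumes "prob_space M"
    and A_meas: "\<And>i. i \<in> {1..4} \<Longrightarrow> A i \<in> measurable M (count_space UNIV)"
    and A_pos: "\<And>i \<omega>. i \<in> {1..4} \<Longrightarrow> \<omega> \<in> space M \<Longrightarrow> A i \<omega> \<ge> 1"
    and A_ident: "\<And>i. i \<in> {1..4} \<Longrightarrow>
                    distr M (count_space UNIV) (A i) = distr M (count_space UNIV) (A 1)"
    and X_meas: "\<And>a. a \<ge> 1 \<Longrightarrow> X a \<in> borel_measurable M"
    and Y_meas: "\<And>b. b \<ge> 1 \<Longrightarrow> Y b \<in> borel_measurable M"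
    and Z_meas: "\<And>c. c \<ge> 1 \<Longrightarrow> Z c \<in> borel_measurable M"
    and X_nonneg: "\<And>a \<omega>. a \<ge> 1 \<Longrightarrow> \<omega> \<in> space M \<Longrightarrow> X a \<omega> \<ge> 0"
    and Y_nonneg: "\<And>b \<omega>. b \<ge> 1 \<Longrightarrow> \<omega> \<in> space M \<Longrightarrow> Y b \<omega> \<ge> 0"
    and Z_nonneg: "\<And>c \<omega>. c \<ge> 1 \<Longrightarrow> \<omega> \<in> space M \<Longrightarrow> Z c \<omega> \<ge> 0"
    and X_ident: "\<And>a. a \<ge> 1 \<Longrightarrow> distr M borel (X a) = distr M borel (X 1)"
    and Y_ident: "\<And>b. b \<ge> 1 \<Longrightarrow> distr M borel (Y b) = distr M borel (X 1)"
    and Z_ident: "\<And>c. c \<ge> 1 \<Longrightarrow> distr M borel (Z c) = distr M borel (X 1)"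
    and indep: "prob_space.indep_vars M (\<lambda>_. borel) (joint_family A X Y Z) rv_indices"
  shows "\<forall>z::real.
           measure M {\<omega> \<in> space M.
              max (\<Sum>a=1..A 1 \<omega>. X a \<omega>) (\<Sum>b=1..A 2 \<omega>. Y b \<omega>) > z}
           \<ge> measure M {\<omega> \<in> space M. (\<Sum>a=1..max (A 3 \<omega>) (A 4 \<omega>). Z a \<omega>) > z}"
proof
  fix z :: real
  interpret P: prob_space M by fact
  define F where "F = joint_family A X Y Z"
  have ind: "P.indep_vars (\<lambda>_. borel) F rv_indices" using indep by (simp add: F_def)
  define D where "D = distr M borel (X 1)"
  define G where "G = (\<lambda>k::nat. measure M {\<omega> \<in> space M. (\<Sum>a=1..k. Z a \<omega>) > z})"
  have sumeq: "measure M {\<omega> \<in> space M. (\<Sum>a=1..k. F (W a) \<omega>) > z} = G k"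
    if W: "W \<in> {IX, IY, IZ}" for W k
  proof (cases "k = 0")
    case True then show ?thesis by (simp add: G_def)
  next
    case False
    have WK: "W ` {1..k} \<subseteq> rv_indices" using W by (auto simp: rv_indices_def)
    have ZK: "IZ ` {1..k} \<subseteq> rv_indices" by (auto simp: rv_indices_def)
    have dW: "\<And>a. a \<in> {1..k} \<Longrightarrow> distr M borel (F (W a)) = D"
    proof -
      fix a assume a: "a \<in> {1..k}"
      then have a1: "a \<ge> 1" by simp
      from W consider "W = IX" | "W = IY" | "W = IZ" by auto
      then show "distr M borel (F (W a)) = D"
        by cases (simp_all add: F_def D_def X_ident[OF a1] Y_ident[OF a1] Z_ident[OF a1])
    qed
    have dZ: "\<And>a. a \<in> {1..k} \<Longrightarrow> distr M borel (F (IZ a)) = D"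
      by (simp add: F_def D_def Z_ident)
    have "measure M {\<omega> \<in> space M. (\<Sum>a=1..k. F (W a) \<omega>) > z}
        = measure (PiM {1..k} (\<lambda>_. D)) {g \<in> space (PiM {1..k} (\<lambda>_. D)). (\<Sum>a\<in>{1..k}. g a) > z}"
      by (rule P.sum_dist[OF ind WK _ _ _ dW]) (use W False in \<open>auto simp: inj_on_def\<close>)
    also have "\<dots> = measure M {\<omega> \<in> space M. (\<Sum>a=1..k. F (IZ a) \<omega>) > z}"
      by (rule P.sum_dist[OF ind ZK _ _ _ dZ, symmetric]) (use False in \<open>auto simp: inj_on_def\<close>)
    finally show ?thesis by (simp add: G_def F_def)
  qed
  have sumX: "measure M {\<omega> \<in> space M. (\<Sum>a=1..k. X a \<omega>) > z} = G k" for k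
    using sumeq[of IX k] by (simp add: F_def)
  have sumY: "measure M {\<omega> \<in> space M. (\<Sum>a=1..k. Y a \<omega>) > z} = G k" for k
    using sumeq[of IY k] by (simp add: F_def)
  define pA where "pA = (\<lambda>m::nat. measure M {\<omega> \<in> space M. A 1 \<omega> = m})"
  have pAi: "measure M {\<omega> \<in> space M. A i \<omega> = m} = pA m" if "i \<in> {1..4}" for i m
  proof -
    have "measure M {\<omega> \<in> space M. A i \<omega> = m} = measure (distr M (count_space UNIV) (A i)) {m}"
      using A_meas[OF that] by (subst measure_distr) (auto intro!: arg_cong[where f="measure M"])
    also have "\<dots> = measure (distr M (count_space UNIV) (A 1)) {m}" using A_ident[OF that] by simp
    also have "\<dots> = pA m"
      using A_meas[of 1] by (subst measure_distr) (auto simp: pA_def intro!: arg_cong[where f="measure M"])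
    finally show ?thesis .
  qed
  have prodlem: "measure M {\<omega> \<in> space M. A i \<omega> = m \<and> A j \<omega> = n \<and> (\<Sum>a=1..k. F (W a) \<omega>) > z}
      = pA m * pA n * G k"
    if ij: "i \<in> {1..4}" "j \<in> {1..4}" "i \<noteq> j" and W: "W \<in> {IX, IY, IZ}" for i j m n k W
  proof -
    have "measure M {\<omega> \<in> space M. A i \<omega> = m \<and> A j \<omega> = n \<and> (\<Sum>a=1..k. F (W a) \<omega>) > z}
        = measure M {\<omega> \<in> space M. F (IA i) \<omega> = real m \<and> F (IA j) \<omega> = real n \<and> (\<Sum>a\<in>{1..k}. F (W a) \<omega>) > z}"
      by (simp add: F_def)
    also have "\<dots> = measure M {\<omega> \<in> space M. F (IA i) \<omega> = real m} * measure M {\<omega> \<in> space M. F (IA j) \<omega> = real n}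
         * measure M {\<omega> \<in> space M. (\<Sum>a\<in>{1..k}. F (W a) \<omega>) > z}"
      by (rule P.three_indep[OF ind]) (use ij W in \<open>auto simp: rv_indices_def\<close>)
    also have "\<dots> = pA m * pA n * G k"
      using pAi[OF ij(1)] pAi[OF ij(2)] sumeq[OF W] by (simp add: F_def)
    finally show ?thesis .
  qed
  have A1[measurable]: "A 1 \<in> measurable M (count_space UNIV)" by (rule A_meas) auto
  have A2[measurable]: "A 2 \<in> measurable M (count_space UNIV)" by (rule A_meas) auto
  have A3[measurable]: "A 3 \<in> measurable M (count_space UNIV)" by (rule A_meas) auto
  have A4[measurable]: "A 4 \<in> measurable M (count_space UNIV)" by (rule A_meas) auto
  have Xs[measurable]: "(\<lambda>\<omega>. \<Sum>a=1..m. X a \<omega>) \<in> borel_measurable M" for m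
    by (rule borel_measurable_sum) (auto intro: X_meas)
  have Ys[measurable]: "(\<lambda>\<omega>. \<Sum>a=1..m. Y a \<omega>) \<in> borel_measurable M" for m
    by (rule borel_measurable_sum) (auto intro: Y_meas)
  have Zs[measurable]: "(\<lambda>\<omega>. \<Sum>a=1..m. Z a \<omega>) \<in> borel_measurable M" for m
    by (rule borel_measurable_sum) (auto intro: Z_meas)
  have XA[measurable]: "(\<lambda>\<omega>. \<Sum>a=1..A 1 \<omega>. X a \<omega>) \<in> borel_measurable M"
    by (rule measurable_compose_countable'[OF Xs A1]) simp
  have YA[measurable]: "(\<lambda>\<omega>. \<Sum>a=1..A 2 \<omega>. Y a \<omega>) \<in> borel_measurable M"
    by (rule measurable_compose_countable'[OF Ys A2]) simp
  define E where "E = (\<lambda>k. {\<omega> \<in> space M. A 1 \<omega> = fst (prod_decode k) \<and> A 2 \<omega> = snd (prod_decode k) \<and>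
     (if snd (prod_decode k) \<le> fst (prod_decode k) then (\<Sum>a=1..fst (prod_decode k). X a \<omega>) > z
      else (\<Sum>a=1..snd (prod_decode k). Y a \<omega>) > z)})"
  define H where "H = (\<lambda>k. {\<omega> \<in> space M. A 3 \<omega> = fst (prod_decode k) \<and> A 4 \<omega> = snd (prod_decode k) \<and>
     (\<Sum>a=1..max (fst (prod_decode k)) (snd (prod_decode k)). Z a \<omega>) > z})"
  have Em: "E k \<in> sets M" for k unfolding E_def by measurable
  have Hm: "H k \<in> sets M" for k unfolding H_def by measurable
  have PE: "measure M (E k) = pA (fst (prod_decode k)) * pA (snd (prod_decode k))
              * G (max (fst (prod_decode k)) (snd (prod_decode k)))" for k
  proof (cases "snd (prod_decode k) \<le> fst (prod_decode k)")
    case True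
    then have "E k = {\<omega> \<in> space M. A 1 \<omega> = fst (prod_decode k) \<and> A 2 \<omega> = snd (prod_decode k) \<and>
       (\<Sum>a=1..fst (prod_decode k). F (IX a) \<omega>) > z}" by (simp add: E_def F_def)
    then show ?thesis using prodlem[of 1 2 IX "fst (prod_decode k)" "snd (prod_decode k)" "fst (prod_decode k)"] True
      by (simp add: max_def)
  next
    case False
    then have "E k = {\<omega> \<in> space M. A 1 \<omega> = fst (prod_decode k) \<and> A 2 \<omega> = snd (prod_decode k) \<and>
       (\<Sum>a=1..snd (prod_decode k). F (IY a) \<omega>) > z}" by (simp add: E_def F_def)
    then show ?thesis using prodlem[of 1 2 IY "fst (prod_decode k)" "snd (prod_decode k)" "snd (prod_decode k)"] False
      by (simp add: max_def)
  qed
  have PH: "measure M (H k) = pA (fst (prod_decode k)) * pA (snd (prod_decode k))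
              * G (max (fst (prod_decode k)) (snd (prod_decode k)))" for k
  proof -
    have "H k = {\<omega> \<in> space M. A 3 \<omega> = fst (prod_decode k) \<and> A 4 \<omega> = snd (prod_decode k) \<and>
       (\<Sum>a=1..max (fst (prod_decode k)) (snd (prod_decode k)). F (IZ a) \<omega>) > z}" by (simp add: H_def F_def)
    then show ?thesis using prodlem[of 3 4 IZ "fst (prod_decode k)" "snd (prod_decode k)"] by simp
  qed
  have key: "m = n" if "fst (prod_decode m) = fst (prod_decode n)" "snd (prod_decode m) = snd (prod_decode n)" for m n
    using that by (metis prod.collapse prod_decode_inverse)
  have dE: "disjoint_family E"
  unfolding disjoint_family_on_def proof (intro ballI impI)
    fix m n :: nat assume "m \<in> UNIV" "n \<in> UNIV" and "m \<noteq> n"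
    then have "\<not> (fst (prod_decode m) = fst (prod_decode n) \<and> snd (prod_decode m) = snd (prod_decode n))"
      using key by blast
    then show "E m \<inter> E n = {}" unfolding E_def by auto
  qed
  have dH: "disjoint_family H"
  unfolding disjoint_family_on_def proof (intro ballI impI)
    fix m n :: nat assume "m \<in> UNIV" "n \<in> UNIV" and "m \<noteq> n"
    then have "\<not> (fst (prod_decode m) = fst (prod_decode n) \<and> snd (prod_decode m) = snd (prod_decode n))"
      using key by blast
    then show "H m \<inter> H n = {}" unfolding H_def by auto
  qed
  have sE: "(\<lambda>k. measure M (E k)) sums measure M (\<Union>k. E k)"
    by (rule P.finite_measure_UNION) (use Em dE in auto)
  have sH: "(\<lambda>k. measure M (H k)) sums measure M (\<Union>k. H k)"
    by (rule P.finite_measure_UNION) (use Hm dH in auto)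
  have eq: "measure M (\<Union>k. E k) = measure M (\<Union>k. H k)"
    using sE sH PE PH sums_unique2 by (metis (no_types, lifting) ext)
  have sub1: "{\<omega> \<in> space M. (\<Sum>a=1..max (A 3 \<omega>) (A 4 \<omega>). Z a \<omega>) > z} \<subseteq> (\<Union>k. H k)"
  proof
    fix \<omega> assume w: "\<omega> \<in> {\<omega> \<in> space M. (\<Sum>a=1..max (A 3 \<omega>) (A 4 \<omega>). Z a \<omega>) > z}"
    then have "\<omega> \<in> H (prod_encode (A 3 \<omega>, A 4 \<omega>))" by (simp add: H_def)
    then show "\<omega> \<in> (\<Union>k. H k)" by blast
  qed
  have sub2: "(\<Union>k. E k) \<subseteq> {\<omega> \<in> space M. max (\<Sum>a=1..A 1 \<omega>. X a \<omega>) (\<Sum>b=1..A 2 \<omega>. Y b \<omega>) > z}"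
    by (auto simp: E_def split: if_splits)
  have Lm: "{\<omega> \<in> space M. max (\<Sum>a=1..A 1 \<omega>. X a \<omega>) (\<Sum>b=1..A 2 \<omega>. Y b \<omega>) > z} \<in> sets M"
    by measurable
  have "measure M {\<omega> \<in> space M. (\<Sum>a=1..max (A 3 \<omega>) (A 4 \<omega>). Z a \<omega>) > z} \<le> measure M (\<Union>k. H k)"
    by (rule P.finite_measure_mono[OF sub1]) (use Hm in auto)
  also have "\<dots> = measure M (\<Union>k. E k)" by (rule eq[symmetric])
  also have "\<dots> \<le> measure M {\<omega> \<in> space M. max (\<Sum>a=1..A 1 \<omega>. X a \<omega>) (\<Sum>b=1..A 2 \<omega>. Y b \<omega>) > z}"
    by (rule P.finite_measure_mono[OF sub2 Lm])
  finally show "measure M {\<omega> \<in> space M. max (\<Sum>a=1..A 1 \<omega>. X a \<omega>) (\<Sum>b=1..A 2 \<omega>. Y b \<omega>) > z}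
           \<ge> measure M {\<omega> \<in> space M. (\<Sum>a=1..max (A 3 \<omega>) (A 4 \<omega>). Z a \<omega>) > z}" .
qed
end
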